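(* Let $A$ be a commutative semiring (not necessarily idempotent), $M$ a flat $A$-module, and $v:A^n\to M$ a homomorphism from a finite free module. Suppose $f,g:A\to A^n$ are homomorphisms with $v\circ f=v\circ g$. Then there exist a finite free module $A^m$ and homomorphisms $u:A^n\to A^m$, $w:A^m\to M$ with $v=w\circ u$ and $u\circ f=u\circ g$.
   Context: Modules over a semiring $A$ are commutative monoids with a compatible $A$-action; the category is semiadditive and has a tensor product $\otimes_A$. An $A$-module $M$ is flat if the functor $-\otimes_A M$ is exact (preserves finite limits as well as finite colimits). *)

theory Defs
  imports Main "HOL-Library.Multiset"
begin

text \<open>The scalars form the type 'a; we allow the
  trivial semiring (hence no 0 ~= 1 requirement).\<close>

record ('a, 'm) smodule =
  mcarrier :: "'m set"
  mzero    :: 'm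
  madd     :: "'m \<Rightarrow> 'm \<Rightarrow> 'm"
  msmul    :: "'a \<Rightarrow> 'm \<Rightarrow> 'm"

definition is_module :: "('a::{comm_semiring_0,comm_monoid_mult}, 'm) smodule \<Rightarrow> bool" where
  "is_module N \<longleftrightarrow>
     mzero N \<in> mcarrier N \<and>
     (\<forall>x\<in>mcarrier N. \<forall>y\<in>mcarrier N. madd N x y \<in> mcarrier N) \<and>
     (\<forall>a. \<forall>x\<in>mcarrier N. msmul N a x \<in> mcarrier N) \<and>
     (\<forall>x\<in>mcarrier N. \<forall>y\<in>mcarrier N. \<forall>z\<in>mcarrier N.
        madd N (madd N x y) z = madd N x (madd N y z)) \<and>
     (\<forall>x\<in>mcarrier N. \<forall>y\<in>mcarrier N. madd N x y = madd N y x) \<and>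
     (\<forall>x\<in>mcarrier N. madd N (mzero N) x = x) \<and>
     (\<forall>a. \<forall>x\<in>mcarrier N. \<forall>y\<in>mcarrier N.
        msmul N a (madd N x y) = madd N (msmul N a x) (msmul N a y)) \<and>
     (\<forall>a b. \<forall>x\<in>mcarrier N. msmul N (a + b) x = madd N (msmul N a x) (msmul N b x)) \<and>
     (\<forall>a b. \<forall>x\<in>mcarrier N. msmul N (a * b) x = msmul N a (msmul N b x)) \<and>
     (\<forall>x\<in>mcarrier N. msmul N 1 x = x) \<and>
     (\<forall>x\<in>mcarrier N. msmul N 0 x = mzero N) \<and>
     (\<forall>a. msmul N a (mzero N) = mzero N)"

definition mhom :: "('a::{comm_semiring_0,comm_monoid_mult}, 'm) smodule \<Rightarrow> ('a, 'n) smodule \<Rightarrow> ('m \<Rightarrow> 'n) \<Rightarrow> bool" where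
  "mhom N N' h \<longleftrightarrow>
     (\<forall>x\<in>mcarrier N. h x \<in> mcarrier N') \<and>
     h (mzero N) = mzero N' \<and>
     (\<forall>x\<in>mcarrier N. \<forall>y\<in>mcarrier N. h (madd N x y) = madd N' (h x) (h y)) \<and>
     (\<forall>a. \<forall>x\<in>mcarrier N. h (msmul N a x) = msmul N' a (h x))"

definition regular_mod :: "('a::{comm_semiring_0,comm_monoid_mult}, 'a) smodule" where
  "regular_mod = \<lparr>mcarrier = UNIV, mzero = 0, madd = (+), msmul = (*)\<rparr>"

definition free_mod :: "nat \<Rightarrow> ('a::{comm_semiring_0,comm_monoid_mult}, nat \<Rightarrow> 'a) smodule" where
  "free_mod n = \<lparr>mcarrier = {x. \<forall>i\<ge>n. x i = 0}, mzero = (\<lambda>_. 0),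
                 madd = (\<lambda>x y i. x i + y i), msmul = (\<lambda>a x i. a * x i)\<rparr>"

text \<open>Tensor product N \<otimes>_A M: formal sums (multisets of pairs) modulo the congruence
  generated by the bilinearity relations.\<close>
inductive tens_rel :: "('a::{comm_semiring_0,comm_monoid_mult}, 'n) smodule \<Rightarrow> ('a, 'm) smodule \<Rightarrow>
    ('n \<times> 'm) multiset \<Rightarrow> ('n \<times> 'm) multiset \<Rightarrow> bool"
  for N :: "('a, 'n) smodule" and M :: "('a, 'm) smodule" where
  trefl: "set_mset s \<subseteq> mcarrier N \<times> mcarrier M \<Longrightarrow> tens_rel N M s s"
| tsym: "tens_rel N M s t \<Longrightarrow> tens_rel N M t s"
| ttrans: "tens_rel N M s t \<Longrightarrow> tens_rel N M t u \<Longrightarrow> tens_rel N M s u"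
| tcong: "tens_rel N M s t \<Longrightarrow> set_mset u \<subseteq> mcarrier N \<times> mcarrier M \<Longrightarrow>
            tens_rel N M (s + u) (t + u)"
| taddl: "x \<in> mcarrier N \<Longrightarrow> x' \<in> mcarrier N \<Longrightarrow> y \<in> mcarrier M \<Longrightarrow>
            tens_rel N M {#(madd N x x', y)#} {#(x, y), (x', y)#}"
| taddr: "x \<in> mcarrier N \<Longrightarrow> y \<in> mcarrier M \<Longrightarrow> y' \<in> mcarrier M \<Longrightarrow>
            tens_rel N M {#(x, madd M y y')#} {#(x, y), (x, y')#}"
| tsmul: "x \<in> mcarrier N \<Longrightarrow> y \<in> mcarrier M \<Longrightarrow>
            tens_rel N M {#(msmul N a x, y)#} {#(x, msmul M a y)#}"
| tzerol: "y \<in> mcarrier M \<Longrightarrow> tens_rel N M {#(mzero N, y)#} {#}"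
| tzeror: "x \<in> mcarrier N \<Longrightarrow> tens_rel N M {#(x, mzero M)#} {#}"

definition tclass :: "('a::{comm_semiring_0,comm_monoid_mult}, 'n) smodule \<Rightarrow> ('a, 'm) smodule \<Rightarrow>
    ('n \<times> 'm) multiset \<Rightarrow> ('n \<times> 'm) multiset set" where
  "tclass N M s = {t. tens_rel N M s t}"

definition tensor :: "('a::{comm_semiring_0,comm_monoid_mult}, 'n) smodule \<Rightarrow> ('a, 'm) smodule \<Rightarrow>
    ('a, ('n \<times> 'm) multiset set) smodule" where
  "tensor N M = \<lparr>
     mcarrier = {tclass N M s | s. set_mset s \<subseteq> mcarrier N \<times> mcarrier M},
     mzero = tclass N M {#},
     madd = (\<lambda>C D. {u. \<exists>s\<in>C. \<exists>t\<in>D. tens_rel N M (s + t) u}),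
     msmul = (\<lambda>a C. {u. \<exists>s\<in>C. tens_rel N M (image_mset (\<lambda>(x, y). (msmul N a x, y)) s) u})\<rparr>"

text \<open>The map h \<otimes> id_M : N \<otimes> M \<rightarrow> N' \<otimes> M induced by h : N \<rightarrow> N'.\<close>
definition tmap :: "('a::{comm_semiring_0,comm_monoid_mult}, 'n) smodule \<Rightarrow> ('a, 'n2) smodule \<Rightarrow>
    ('a, 'm) smodule \<Rightarrow> ('n \<Rightarrow> 'n2) \<Rightarrow> ('n \<times> 'm) multiset set \<Rightarrow> ('n2 \<times> 'm) multiset set" where
  "tmap N N' M h C = {u. \<exists>s\<in>C. tens_rel N' M (image_mset (\<lambda>(x, y). (h x, y)) s) u}"

definition prod_mod :: "('a::{comm_semiring_0,comm_monoid_mult}, 'n) smodule \<Rightarrow> ('a, 'k) smodule \<Rightarrow>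
    ('a, 'n \<times> 'k) smodule" where
  "prod_mod N1 N2 = \<lparr>mcarrier = mcarrier N1 \<times> mcarrier N2,
     mzero = (mzero N1, mzero N2),
     madd = (\<lambda>(x1, x2) (y1, y2). (madd N1 x1 y1, madd N2 x2 y2)),
     msmul = (\<lambda>a (x1, x2). (msmul N1 a x1, msmul N2 a x2))\<rparr>"

text \<open>Universe of test modules for exactness: modules whose carrier consists of
  elements of type (nat \<Rightarrow> 'a) set (this contains isomorphic copies of all
  quotients of A^\<nat>, in particular of all countably generated modules).\<close>
type_synonym 'a univ = "(nat \<Rightarrow> 'a) set"

text \<open>-\<otimes>M preserves finite limits: terminal object, binary products, equalizers
  (canonical comparison maps are bijections).\<close>
definition tensor_preserves_finite_limits :: "('a::{comm_semiring_0,comm_monoid_mult}, 'm) smodule \<Rightarrow> bool" where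
  "tensor_preserves_finite_limits M \<longleftrightarrow>
    (\<forall>Z :: ('a, 'a univ) smodule. is_module Z \<and> mcarrier Z = {mzero Z} \<longrightarrow>
        (\<exists>t. mcarrier (tensor Z M) = {t})) \<and>
    (\<forall>(N1 :: ('a, 'a univ) smodule) (N2 :: ('a, 'a univ) smodule).
        is_module N1 \<and> is_module N2 \<longrightarrow>
        bij_betw (\<lambda>t. (tmap (prod_mod N1 N2) N1 M fst t, tmap (prod_mod N1 N2) N2 M snd t))
          (mcarrier (tensor (prod_mod N1 N2) M))
          (mcarrier (tensor N1 M) \<times> mcarrier (tensor N2 M))) \<and>
    (\<forall>(N1 :: ('a, 'a univ) smodule) (N2 :: ('a, 'a univ) smodule) f g.
        is_module N1 \<and> is_module N2 \<and> mhom N1 N2 f \<and> mhom N1 N2 g \<longrightarrow>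
        (let E = N1\<lparr>mcarrier := {x \<in> mcarrier N1. f x = g x}\<rparr> in
           inj_on (tmap E N1 M id) (mcarrier (tensor E M)) \<and>
           tmap E N1 M id ` mcarrier (tensor E M) =
             {t \<in> mcarrier (tensor N1 M). tmap N1 N2 M f t = tmap N1 N2 M g t}))"

definition flat :: "('a::{comm_semiring_0,comm_monoid_mult}, 'm) smodule \<Rightarrow> bool" where
  "flat M \<longleftrightarrow> is_module M \<and> tensor_preserves_finite_limits M"

end

theory Submission
  imports Defs
begin



context fixes M :: "('a::{comm_semiring_0,comm_monoid_mult}, 'm) smodule" assumes mM: "is_module M"
begin
lemma mz_in: "mzero M \<in> mcarrier M" using mM unfolding is_module_def by (elim conjE) metis
lemma ma_in: "x \<in> mcarrier M \<Longrightarrow> y \<in> mcarrier M \<Longrightarrow> madd M x y \<in> mcarrier M" using mM unfolding is_module_def by (elim conjE) metis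
lemma ms_in: "x \<in> mcarrier M \<Longrightarrow> msmul M a x \<in> mcarrier M" using mM unfolding is_module_def by (elim conjE) metis
lemma ma_assoc: "x \<in> mcarrier M \<Longrightarrow> y \<in> mcarrier M \<Longrightarrow> z \<in> mcarrier M \<Longrightarrow> madd M (madd M x y) z = madd M x (madd M y z)" using mM unfolding is_module_def by (elim conjE) metis
lemma ma_comm: "x \<in> mcarrier M \<Longrightarrow> y \<in> mcarrier M \<Longrightarrow> madd M x y = madd M y x" using mM unfolding is_module_def by (elim conjE) metis
lemma ma_lz: "x \<in> mcarrier M \<Longrightarrow> madd M (mzero M) x = x" using mM unfolding is_module_def by (elim conjE) metis
lemma ma_rz: "x \<in> mcarrier M \<Longrightarrow> madd M x (mzero M) = x" using ma_lz ma_comm mz_in by metis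
lemma ms_add: "x \<in> mcarrier M \<Longrightarrow> y \<in> mcarrier M \<Longrightarrow> msmul M a (madd M x y) = madd M (msmul M a x) (msmul M a y)" using mM unfolding is_module_def by (elim conjE) metis
lemma ms_sadd: "x \<in> mcarrier M \<Longrightarrow> msmul M (a + b) x = madd M (msmul M a x) (msmul M b x)" using mM unfolding is_module_def by (elim conjE) metis
lemma ms_mult: "x \<in> mcarrier M \<Longrightarrow> msmul M (a * b) x = msmul M a (msmul M b x)" using mM unfolding is_module_def by (elim conjE) metis
lemma ms_one: "x \<in> mcarrier M \<Longrightarrow> msmul M 1 x = x" using mM unfolding is_module_def by (elim conjE) metis
lemma ms_zero: "x \<in> mcarrier M \<Longrightarrow> msmul M 0 x = mzero M" using mM unfolding is_module_def by (elim conjE) metis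
lemma ms_zz: "msmul M a (mzero M) = mzero M" using mM unfolding is_module_def by (elim conjE) metis
lemma ma_lcomm: "x \<in> mcarrier M \<Longrightarrow> y \<in> mcarrier M \<Longrightarrow> z \<in> mcarrier M \<Longrightarrow> madd M x (madd M y z) = madd M y (madd M x z)"
  by (metis ma_assoc ma_comm)
end
definition RM :: "('a::{comm_semiring_0,comm_monoid_mult}, 'm) smodule \<Rightarrow> 'm \<Rightarrow> 'm" where
  "RM M z = (if z \<in> mcarrier M then z else mzero M)"

definition sumM :: "('a::{comm_semiring_0,comm_monoid_mult}, 'm) smodule \<Rightarrow> ('b \<Rightarrow> 'm) \<Rightarrow> 'b multiset \<Rightarrow> 'm" where
  "sumM M h s = fold_mset (\<lambda>p acc. madd M (RM M (h p)) (RM M acc)) (mzero M) s"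

lemma RM_in: "is_module M \<Longrightarrow> RM M z \<in> mcarrier M"
  by (auto simp: RM_def is_module_def)

lemma RM_id[simp]: "z \<in> mcarrier M \<Longrightarrow> RM M z = z"
  by (simp add: RM_def)

lemma cfc: assumes "is_module M"
  shows "comp_fun_commute (\<lambda>p acc. madd M (RM M (h p)) (RM M acc))"
proof
  fix x y
  have C: "\<And>z. RM M z \<in> mcarrier M" using RM_in[OF assms] .
  have cl: "\<And>a b. a \<in> mcarrier M \<Longrightarrow> b \<in> mcarrier M \<Longrightarrow> madd M a b \<in> mcarrier M"
    using assms by (auto simp: is_module_def)
  have as: "\<And>a b c. a \<in> mcarrier M \<Longrightarrow> b \<in> mcarrier M \<Longrightarrow> c \<in> mcarrier M \<Longrightarrow> madd M (madd M a b) c = madd M a (madd M b c)"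
    using assms by (auto simp: is_module_def)
  have co: "\<And>a b. a \<in> mcarrier M \<Longrightarrow> b \<in> mcarrier M \<Longrightarrow> madd M a b = madd M b a"
    using assms by (auto simp: is_module_def)
  show "(\<lambda>acc. madd M (RM M (h y)) (RM M acc)) \<circ> (\<lambda>acc. madd M (RM M (h x)) (RM M acc)) =
        (\<lambda>acc. madd M (RM M (h x)) (RM M acc)) \<circ> (\<lambda>acc. madd M (RM M (h y)) (RM M acc))"
  proof
    fix z
    have "madd M (RM M (h y)) (madd M (RM M (h x)) (RM M z)) = madd M (RM M (h x)) (madd M (RM M (h y)) (RM M z))"
      by (rule ma_lcomm[OF assms C C C])
    then show "((\<lambda>acc. madd M (RM M (h y)) (RM M acc)) \<circ> (\<lambda>acc. madd M (RM M (h x)) (RM M acc))) z =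
        ((\<lambda>acc. madd M (RM M (h x)) (RM M acc)) \<circ> (\<lambda>acc. madd M (RM M (h y)) (RM M acc))) z"
      using C cl by simp
  qed
qed

lemma sumM_empty[simp]: "sumM M h {#} = mzero M"
  by (simp add: sumM_def)

lemma sumM_in: "is_module M \<Longrightarrow> sumM M h s \<in> mcarrier M"
proof (induction s)
  case empty then show ?case by (simp add: is_module_def)
next
  case (add x s)
  then show ?case using comp_fun_commute.fold_mset_add_mset[OF cfc[OF add.prems, of h]] RM_in[OF add.prems]
    by (simp add: sumM_def is_module_def)
qed

lemma sumM_add_mset: "is_module M \<Longrightarrow> h p \<in> mcarrier M \<Longrightarrow>
   sumM M h (add_mset p s) = madd M (h p) (sumM M h s)"
  using comp_fun_commute.fold_mset_add_mset[OF cfc, of M h] sumM_in[of M h s]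
  by (simp add: sumM_def)

lemma sumM_add_mset': "is_module M \<Longrightarrow> sumM M h (add_mset x u) = madd M (RM M (h x)) (sumM M h u)"
  using comp_fun_commute.fold_mset_add_mset[OF cfc, of M h] sumM_in[of M h u, unfolded sumM_def]
  by (simp add: sumM_def)

lemma sumM_union: assumes "is_module M" shows "sumM M h (s + t) = madd M (sumM M h s) (sumM M h t)"
proof (induction t)
  case empty then show ?case using sumM_in[OF assms, of h s] assms
    unfolding is_module_def by simp
next
  case (add x t)
  have C: "\<And>z. RM M z \<in> mcarrier M" using RM_in[OF assms] .
  have e1: "sumM M h (add_mset x u) = madd M (RM M (h x)) (sumM M h u)" for u
    using sumM_add_mset'[OF assms] .
  have "sumM M h (s + add_mset x t) = madd M (RM M (h x)) (madd M (sumM M h s) (sumM M h t))"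
    using e1[of "s+t"] add by simp
  also have "\<dots> = madd M (sumM M h s) (madd M (RM M (h x)) (sumM M h t))"
  proof -
    have ac: "\<And>a b c. a \<in> mcarrier M \<Longrightarrow> b \<in> mcarrier M \<Longrightarrow> c \<in> mcarrier M \<Longrightarrow> madd M a (madd M b c) = madd M b (madd M a c)"
      using ma_lcomm[OF assms] by blast
    show ?thesis by (rule ac[OF C sumM_in[OF assms] sumM_in[OF assms]])
  qed
  finally show ?case using e1 by simp
qed

lemma sumM_cong: "is_module M \<Longrightarrow> (\<And>p. p \<in># s \<Longrightarrow> h p = h' p) \<Longrightarrow> sumM M h s = sumM M h' s"
proof (induction s)
  case (add x s)
  then show ?case by (simp add: sumM_add_mset')
qed simp

lemma sumM_image: "is_module M \<Longrightarrow> sumM M h (image_mset g s) = sumM M (h \<circ> g) s"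
  by (induction s) (simp_all add: sumM_add_mset')





lemma sumM_single: "is_module M \<Longrightarrow> h p \<in> mcarrier M \<Longrightarrow> sumM M h {#p#} = h p"
  using sumM_add_mset[of M h p "{#}"] ma_rz by simp

lemma tr_carrier:
  assumes N: "is_module N" and M: "is_module M"
  shows "tens_rel N M s t \<Longrightarrow> set_mset s \<subseteq> mcarrier N \<times> mcarrier M \<and> set_mset t \<subseteq> mcarrier N \<times> mcarrier M"
proof (induction rule: tens_rel.induct)
  case (taddl x x' y) then show ?case using ma_in[OF N] by auto
next
  case (taddr x y y') then show ?case using ma_in[OF M] by auto
next
  case (tsmul x y a) then show ?case using ms_in[OF N] ms_in[OF M] by auto
next
  case (tzerol y) then show ?case using mz_in[OF N] by auto
next
  case (tzeror x) then show ?case using mz_in[OF M] by auto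
qed auto

lemma tr_map:
  assumes F: "mhom N N' F"
  shows "tens_rel N M s t \<Longrightarrow> tens_rel N' M (image_mset (\<lambda>(x, y). (F x, y)) s) (image_mset (\<lambda>(x, y). (F x, y)) t)"
proof (induction rule: tens_rel.induct)
  case (trefl s) then show ?case using F unfolding mhom_def by (intro tens_rel.trefl) fastforce
next
  case (tsym s t) then show ?case by (blast intro: tens_rel.tsym)
next
  case (ttrans s t u) then show ?case by (blast intro: tens_rel.ttrans)
next
  case (tcong s t u) then show ?case using F unfolding mhom_def by (simp, intro tens_rel.tcong) fastforce+
next
  case (taddl x x' y) then show ?case using F by (auto simp: mhom_def intro!: tens_rel.taddl)
next
  case (taddr x y y') then show ?case using F by (auto simp: mhom_def intro!: tens_rel.taddr)
next
  case (tsmul x y a) then show ?case using F by (auto simp: mhom_def intro!: tens_rel.tsmul)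
next
  case (tzerol y) then show ?case using F by (auto simp: mhom_def intro!: tens_rel.tzerol)
next
  case (tzeror x) then show ?case using F by (auto simp: mhom_def intro!: tens_rel.tzeror)
qed

lemma tr_inv:
  assumes M: "is_module M"
    and padd: "\<And>a b. a \<in> mcarrier N \<Longrightarrow> b \<in> mcarrier N \<Longrightarrow> \<phi> (madd N a b) = \<phi> a + \<phi> b"
    and psm: "\<And>c a. a \<in> mcarrier N \<Longrightarrow> \<phi> (msmul N c a) = c * \<phi> a"
    and pz: "\<phi> (mzero N) = 0"
  shows "tens_rel N M s t \<Longrightarrow> sumM M (\<lambda>(k, y). msmul M (\<phi> k) y) s = sumM M (\<lambda>(k, y). msmul M (\<phi> k) y) t"
proof (induction rule: tens_rel.induct)
  case (tcong s t u) then show ?case by (simp add: sumM_union[OF M])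
next
  case (taddl x x' y)
  have "sumM M (\<lambda>(k, y). msmul M (\<phi> k) y) {#(x, y), (x', y)#} = madd M (msmul M (\<phi> x) y) (msmul M (\<phi> x') y)"
    using taddl by (simp add: sumM_add_mset[OF M] sumM_single[OF M] ms_in[OF M] ma_rz[OF M])
  moreover have "sumM M (\<lambda>(k, y). msmul M (\<phi> k) y) {#(madd N x x', y)#} = msmul M (\<phi> (madd N x x')) y"
    using sumM_single[OF M, of "\<lambda>(k, y). msmul M (\<phi> k) y" "(madd N x x', y)"] taddl ms_in[OF M] by simp
  ultimately show ?case using taddl
    by (simp add: padd ms_sadd[OF M])
next
  case (taddr x y y')
  have "sumM M (\<lambda>(k, y). msmul M (\<phi> k) y) {#(x, y), (x, y')#} = madd M (msmul M (\<phi> x) y) (msmul M (\<phi> x) y')"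
    using taddr by (simp add: sumM_add_mset[OF M] sumM_single[OF M] ms_in[OF M] ma_rz[OF M])
  moreover have "sumM M (\<lambda>(k, y). msmul M (\<phi> k) y) {#(x, madd M y y')#} = msmul M (\<phi> x) (madd M y y')"
    using sumM_single[OF M, of "\<lambda>(k, y). msmul M (\<phi> k) y" "(x, madd M y y')"] taddr ms_in[OF M] ma_in[OF M] by simp
  ultimately show ?case using taddr
    by (simp add: ms_add[OF M])
next
  case (tsmul x y a)
  then show ?case
    by (simp add: sumM_single[OF M] ms_in[OF M] psm ms_mult[OF M, symmetric] mult.commute)
next
  case (tzerol y)
  then show ?case
    by (simp add: sumM_single[OF M] mz_in[OF M] pz ms_zero[OF M])
next
  case (tzeror x)
  then show ?case
    by (simp add: sumM_single[OF M] mz_in[OF M] ms_zz[OF M])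
qed auto




lemma free_is_module: "is_module (free_mod n :: ('a::{comm_semiring_0,comm_monoid_mult}, nat \<Rightarrow> 'a) smodule)"
  unfolding is_module_def free_mod_def by (auto simp: algebra_simps)

definition liftm :: "('a::{comm_semiring_0,comm_monoid_mult}, 'b) smodule \<Rightarrow> ('a, 'b set) smodule" where
  "liftm N = \<lparr>mcarrier = (\<lambda>x. {x}) ` mcarrier N, mzero = {mzero N},
     madd = (\<lambda>X Y. {madd N (the_elem X) (the_elem Y)}), msmul = (\<lambda>a X. {msmul N a (the_elem X)})\<rparr>"

lemma liftm_simps[simp]: "mcarrier (liftm N) = (\<lambda>x. {x}) ` mcarrier N" "mzero (liftm N) = {mzero N}"
  "madd (liftm N) X Y = {madd N (the_elem X) (the_elem Y)}" "msmul (liftm N) a X = {msmul N a (the_elem X)}"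
  by (simp_all add: liftm_def)

lemma lift_is_module: assumes "is_module N" shows "is_module (liftm N)"
proof -
  have "is_module (liftm N) = is_module N" unfolding is_module_def by (simp add: image_iff)
  then show ?thesis using assms by simp
qed

definition ev :: "nat \<Rightarrow> nat \<Rightarrow> 'a::{comm_semiring_0,comm_monoid_mult}" where
  "ev i = (\<lambda>j. if j = i then 1 else 0)"

definition pairv :: "nat \<Rightarrow> (nat \<Rightarrow> 'a::{comm_semiring_0,comm_monoid_mult}) \<Rightarrow> (nat \<Rightarrow> 'a) \<Rightarrow> 'a" where
  "pairv n k x = (\<Sum>j<n. k j * x j)"

lemma pairv_ev: assumes "i < n" shows "pairv n (ev i) x = x i"
proof -
  have "(\<Sum>j<n. ev i j * x j) = (\<Sum>j<n. if j = i then x i else 0)" by (rule sum.cong) (auto simp: ev_def)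
  then show ?thesis using assms by (simp add: pairv_def)
qed

lemma ev_in: "i < n \<Longrightarrow> ev i \<in> mcarrier (free_mod n)"
  by (simp add: ev_def free_mod_def)

lemma v_decomp:
  assumes M: "is_module M" and v: "mhom (free_mod n) M v" and x: "x \<in> mcarrier (free_mod n)"
  shows "v x = sumM M (\<lambda>i. msmul M (x i) (v (ev i))) (mset [0..<n])"
proof -
  have vin: "\<And>y. y \<in> mcarrier (free_mod n) \<Longrightarrow> v y \<in> mcarrier M" using v by (simp add: mhom_def)
  have vadd: "\<And>y z. y \<in> mcarrier (free_mod n) \<Longrightarrow> z \<in> mcarrier (free_mod n) \<Longrightarrow>
      v (\<lambda>i. y i + z i) = madd M (v y) (v z)"
    using v by (simp add: mhom_def free_mod_def)
  have vsm: "\<And>a y. y \<in> mcarrier (free_mod n) \<Longrightarrow> v (\<lambda>i. a * y i) = msmul M a (v y)"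
    using v by (simp add: mhom_def free_mod_def)
  have vz: "v (\<lambda>_. 0) = mzero M" using v by (simp add: mhom_def free_mod_def)
  have "k \<le> n \<Longrightarrow> v (\<lambda>i. if i < k then x i else 0) = sumM M (\<lambda>i. msmul M (x i) (v (ev i))) (mset [0..<k])" for k
  proof (induction k)
    case 0 then show ?case using vz by simp
  next
    case (Suc k)
    let ?r = "\<lambda>i. if i < k then x i else 0"
    have r_in: "?r \<in> mcarrier (free_mod n)" using x by (simp add: free_mod_def)
    have e_in: "(\<lambda>i. x k * ev k i) \<in> mcarrier (free_mod n)" using Suc.prems by (simp add: free_mod_def ev_def)
    have eq: "(\<lambda>i. if i < Suc k then x i else 0) = (\<lambda>i. ?r i + x k * ev k i)"
      by (auto simp: ev_def fun_eq_iff less_Suc_eq)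
    have "v (\<lambda>i. if i < Suc k then x i else 0) = madd M (v ?r) (msmul M (x k) (v (ev k)))"
    proof -
      have k: "k < n" using Suc.prems by simp
      have "v (\<lambda>i. ?r i + x k * ev k i) = madd M (v ?r) (v (\<lambda>i. x k * ev k i))" by (rule vadd[OF r_in e_in])
      moreover have "v (\<lambda>i. x k * ev k i) = msmul M (x k) (v (ev k))" by (rule vsm[OF ev_in[OF k]])
      ultimately show ?thesis unfolding eq by simp
    qed
    also have "\<dots> = madd M (msmul M (x k) (v (ev k))) (sumM M (\<lambda>i. msmul M (x i) (v (ev i))) (mset [0..<k]))"
    proof -
      have k: "k < n" using Suc.prems by simp
      have ih: "v ?r = sumM M (\<lambda>i. msmul M (x i) (v (ev i))) (mset [0..<k])" using Suc.IH Suc.prems by simp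
      show ?thesis unfolding ih by (rule ma_comm[OF M sumM_in[OF M] ms_in[OF M vin[OF ev_in[OF k]]]])
    qed
    also have "\<dots> = sumM M (\<lambda>i. msmul M (x i) (v (ev i))) (mset [0..<Suc k])"
      using Suc.prems by (simp add: sumM_add_mset[OF M] ms_in[OF M] vin ev_in)
    finally show ?case .
  qed
  moreover have "(\<lambda>i. if i < n then x i else 0) = x" using x by (auto simp: free_mod_def fun_eq_iff)
  ultimately show ?thesis by (metis order_refl)
qed

abbreviation "N2 \<equiv> liftm (free_mod 1)"

lemma N2_elem: "k \<in> mcarrier (liftm (free_mod (Suc 0)) :: ('a::{comm_semiring_0,comm_monoid_mult}, (nat \<Rightarrow> 'a) set) smodule) \<Longrightarrow>
   k = msmul (liftm (free_mod (Suc 0))) (the_elem k 0) {ev 0}"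
proof -
  assume "k \<in> mcarrier (liftm (free_mod (Suc 0)) :: ('a, (nat \<Rightarrow> 'a) set) smodule)"
  then obtain \<kappa> where k: "k = {\<kappa>}" and z: "\<forall>i\<ge>Suc 0. \<kappa> i = (0::'a)" by (auto simp: free_mod_def)
  have "\<kappa> = (\<lambda>i. \<kappa> 0 * ev 0 i)"
  proof
    fix i show "\<kappa> i = \<kappa> 0 * ev 0 i" using z by (cases i) (auto simp: ev_def)
  qed
  then have e: "(\<lambda>i. \<kappa> 0 * ev 0 i) = \<kappa>" by (rule sym)
  show ?thesis using k by (simp add: free_mod_def e)
qed




lemma sumM_zero: "is_module M \<Longrightarrow> sumM M (\<lambda>_. mzero M) s = mzero M"
  by (induction s) (simp_all add: sumM_add_mset mz_in ma_lz)

lemma sumM_madd: assumes M: "is_module M"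
  shows "(\<And>p. p \<in># s \<Longrightarrow> h p \<in> mcarrier M \<and> h' p \<in> mcarrier M) \<Longrightarrow>
    sumM M (\<lambda>p. madd M (h p) (h' p)) s = madd M (sumM M h s) (sumM M h' s)"
proof (induction s)
  case empty then show ?case by (simp add: ma_lz[OF M] mz_in[OF M])
next
  case (add x s)
  have hx: "h x \<in> mcarrier M" "h' x \<in> mcarrier M" using add.prems by auto
  have S: "sumM M h s \<in> mcarrier M" "sumM M h' s \<in> mcarrier M" using sumM_in[OF M] by auto
  have "sumM M (\<lambda>p. madd M (h p) (h' p)) (add_mset x s) = madd M (madd M (h x) (h' x)) (madd M (sumM M h s) (sumM M h' s))"
    using add by (simp add: sumM_add_mset[OF M] ma_in[OF M])
  also have "\<dots> = madd M (madd M (h x) (sumM M h s)) (madd M (h' x) (sumM M h' s))"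
    using hx S by (simp add: ma_assoc[OF M] ma_in[OF M] ma_lcomm[OF M])
  finally show ?case using hx by (simp add: sumM_add_mset[OF M])
qed

lemma sumM_msmul: assumes M: "is_module M"
  shows "(\<And>p. p \<in># s \<Longrightarrow> h p \<in> mcarrier M) \<Longrightarrow>
    sumM M (\<lambda>p. msmul M c (h p)) s = msmul M c (sumM M h s)"
proof (induction s)
  case empty then show ?case by (simp add: ms_zz[OF M])
next
  case (add x s)
  then show ?case by (simp add: sumM_add_mset[OF M] ms_in[OF M] ms_add[OF M] sumM_in[OF M])
qed

lemma pairv_add1: "pairv n (\<lambda>i. a i + b i) x = pairv n a x + pairv n b x"
  by (simp add: pairv_def sum.distrib algebra_simps)
lemma pairv_smul1: "pairv n (\<lambda>i. c * a i) x = c * pairv n a x"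
  by (simp add: pairv_def sum_distrib_left algebra_simps)
lemma pairv_zero1: "pairv n (\<lambda>_. 0) x = 0"
  by (simp add: pairv_def)
lemma pairv_add2: "pairv n k (\<lambda>i. a i + b i) = pairv n k a + pairv n k b"
  by (simp add: pairv_def sum.distrib algebra_simps)
lemma pairv_smul2: "pairv n k (\<lambda>i. c * a i) = c * pairv n k a"
  by (simp add: pairv_def sum_distrib_left algebra_simps)
lemma pairv_zero2: "pairv n k (\<lambda>_. 0) = 0"
  by (simp add: pairv_def)

lemma class_eq: "tens_rel N M a b \<Longrightarrow> tclass N M a = tclass N M b"
  unfolding tclass_def by (blast intro: tens_rel.ttrans tens_rel.tsym)

lemma tmap_class:
  assumes F: "mhom N N' F" and s: "set_mset s \<subseteq> mcarrier N \<times> mcarrier M"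
  shows "tmap N N' M F (tclass N M s) = tclass N' M (image_mset (\<lambda>(x, y). (F x, y)) s)"
proof
  show "tmap N N' M F (tclass N M s) \<subseteq> tclass N' M (image_mset (\<lambda>(x, y). (F x, y)) s)"
    unfolding tmap_def tclass_def using tr_map[OF F] by (blast intro: tens_rel.ttrans)
  have "s \<in> tclass N M s" using s unfolding tclass_def by (blast intro: tens_rel.trefl)
  then show "tclass N' M (image_mset (\<lambda>(x, y). (F x, y)) s) \<subseteq> tmap N N' M F (tclass N M s)"
    unfolding tmap_def tclass_def by blast
qed

abbreviation "one2 \<equiv> {ev 0}"

lemma one2_in: "one2 \<in> mcarrier (liftm (free_mod (Suc 0)))"
  by (simp add: ev_in)

lemma nf:
  assumes M: "is_module M"
  shows "set_mset s \<subseteq> mcarrier (liftm (free_mod (Suc 0))) \<times> mcarrier M \<Longrightarrow>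
    tens_rel (liftm (free_mod (Suc 0)) :: ('a::{comm_semiring_0,comm_monoid_mult}, (nat \<Rightarrow> 'a) set) smodule) M s
       {#(one2, sumM M (\<lambda>(k, y). msmul M (the_elem k 0) y) s)#}"
proof (induction s)
  case empty
  show ?case unfolding sumM_empty by (rule tens_rel.tsym, rule tens_rel.tzeror, rule one2_in)
next
  case (add p s)
  let ?N = "liftm (free_mod (Suc 0)) :: ('a, (nat \<Rightarrow> 'a) set) smodule"
  obtain k y where p: "p = (k, y)" by (cases p)
  have k: "k \<in> mcarrier ?N" and y: "y \<in> mcarrier M" using add.prems p by auto
  let ?c = "the_elem k 0"
  let ?P = "sumM M (\<lambda>(k, y). msmul M (the_elem k 0) y) s"
  have IH: "tens_rel ?N M s {#(one2, ?P)#}" using add by auto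
  have P_in: "?P \<in> mcarrier M" by (rule sumM_in[OF M])
  have s1: "tens_rel ?N M (s + {#(k, y)#}) ({#(one2, ?P)#} + {#(k, y)#})"
    by (rule tens_rel.tcong[OF IH]) (use k y in auto)
  have "tens_rel ?N M {#(msmul ?N ?c one2, y)#} {#(one2, msmul M ?c y)#}"
    by (rule tens_rel.tsmul[OF one2_in y])
  then have "tens_rel ?N M {#(k, y)#} {#(one2, msmul M ?c y)#}" using N2_elem[OF k] by simp
  then have s2: "tens_rel ?N M ({#(k, y)#} + {#(one2, ?P)#}) ({#(one2, msmul M ?c y)#} + {#(one2, ?P)#})"
    by (rule tens_rel.tcong) (use one2_in P_in in auto)
  have s3: "tens_rel ?N M {#(one2, msmul M ?c y), (one2, ?P)#} {#(one2, madd M (msmul M ?c y) ?P)#}"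
    by (rule tens_rel.tsym, rule tens_rel.taddr[OF one2_in ms_in[OF M y] P_in])
  have "tens_rel ?N M (add_mset (k, y) s) {#(one2, madd M (msmul M ?c y) ?P)#}"
  proof -
    have e1: "s + {#(k, y)#} = add_mset (k, y) s" by simp
    have e2: "{#(one2, ?P)#} + {#(k, y)#} = {#(k, y)#} + {#(one2, ?P)#}" by (rule add.commute)
    have e3: "{#(one2, msmul M ?c y)#} + {#(one2, ?P)#} = {#(one2, msmul M ?c y), (one2, ?P)#}" by simp
    show ?thesis using tens_rel.ttrans[OF s1[unfolded e1 e2] tens_rel.ttrans[OF s2[unfolded e3] s3]] .
  qed
  moreover have "sumM M (\<lambda>(k, y). msmul M (the_elem k 0) y) (add_mset (k, y) s) = madd M (msmul M ?c y) ?P"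
    by (simp add: sumM_add_mset[OF M] ms_in[OF M y])
  ultimately show ?case using p by simp
qed




theorem mainTheorem5:
  fixes M :: "('a::{comm_semiring_0,comm_monoid_mult}, 'm) smodule"
    and n :: nat
    and v :: "(nat \<Rightarrow> 'a) \<Rightarrow> 'm"
    and f g :: "'a \<Rightarrow> (nat \<Rightarrow> 'a)"
  assumes "is_module M"
    and "flat M"
    and "mhom (free_mod n) M v"
    and "mhom regular_mod (free_mod n) f"
    and "mhom regular_mod (free_mod n) g"
    and "\<forall>x\<in>mcarrier regular_mod. v (f x) = v (g x)"
  shows "\<exists>(m::nat) (u :: (nat \<Rightarrow> 'a) \<Rightarrow> (nat \<Rightarrow> 'a)) (w :: (nat \<Rightarrow> 'a) \<Rightarrow> 'm).
           mhom (free_mod n) (free_mod m) u \<and> mhom (free_mod m) M w \<and>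
           (\<forall>x\<in>mcarrier (free_mod n). v x = w (u x)) \<and>
           (\<forall>x\<in>mcarrier regular_mod. u (f x) = u (g x))"
proof -
  note Mm = assms(1)
  note vh = assms(3)
  have vin: "\<And>y. y \<in> mcarrier (free_mod n) \<Longrightarrow> v y \<in> mcarrier M" using vh by (simp add: mhom_def)
  define f1 where "f1 = f 1"
  define g1 where "g1 = g 1"
  have f1_in: "f1 \<in> mcarrier (free_mod n)" using assms(4) by (simp add: f1_def mhom_def regular_mod_def)
  have g1_in: "g1 \<in> mcarrier (free_mod n)" using assms(5) by (simp add: g1_def mhom_def regular_mod_def)
  have f_eq: "\<And>a. f a = (\<lambda>i. a * f1 i)"
  proof -
    fix a
    have "\<forall>a x. f (a * x) = msmul (free_mod n) a (f x)"
      using assms(4) by (simp add: mhom_def regular_mod_def)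
    then have "f (a * 1) = msmul (free_mod n) a (f 1)" by blast
    then show "f a = (\<lambda>i. a * f1 i)" by (simp add: regular_mod_def free_mod_def f1_def)
  qed
  have g_eq: "\<And>a. g a = (\<lambda>i. a * g1 i)"
  proof -
    fix a
    have "\<forall>a x. g (a * x) = msmul (free_mod n) a (g x)"
      using assms(5) by (simp add: mhom_def regular_mod_def)
    then have "g (a * 1) = msmul (free_mod n) a (g 1)" by blast
    then show "g a = (\<lambda>i. a * g1 i)" by (simp add: regular_mod_def free_mod_def g1_def)
  qed
  have vfg: "v f1 = v g1" using assms(6) by (simp add: f1_def g1_def regular_mod_def)

  define N1 where "N1 = (liftm (free_mod n) :: ('a, (nat \<Rightarrow> 'a) set) smodule)"
  define N2 where "N2 = (liftm (free_mod (Suc 0)) :: ('a, (nat \<Rightarrow> 'a) set) smodule)"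
  define F where "F = (\<lambda>X. {\<lambda>i::nat. if i = 0 then pairv n (the_elem X) f1 else (0::'a)})"
  define G where "G = (\<lambda>X. {\<lambda>i::nat. if i = 0 then pairv n (the_elem X) g1 else (0::'a)})"
  have N1m: "is_module N1" unfolding N1_def by (rule lift_is_module[OF free_is_module])
  have N2m: "is_module N2" unfolding N2_def by (rule lift_is_module[OF free_is_module])
  have Fin: "F X \<in> mcarrier N2" for X
    unfolding F_def N2_def liftm_simps
    by (rule image_eqI[where x="\<lambda>i::nat. if i = 0 then pairv n (the_elem X) f1 else 0"]) (auto simp: free_mod_def)
  have homF: "mhom N1 N2 F"
    unfolding mhom_def using Fin
    unfolding N1_def N2_def F_def
    by (auto simp: free_mod_def fun_eq_iff pairv_add1 pairv_smul1 pairv_zero1)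
  have Gin: "G X \<in> mcarrier N2" for X
    unfolding G_def N2_def liftm_simps
    by (rule image_eqI[where x="\<lambda>i::nat. if i = 0 then pairv n (the_elem X) g1 else 0"]) (auto simp: free_mod_def)
  have homG: "mhom N1 N2 G"
    unfolding mhom_def using Gin
    unfolding N1_def N2_def G_def
    by (auto simp: free_mod_def fun_eq_iff pairv_add1 pairv_smul1 pairv_zero1)
  define E where "E = N1\<lparr>mcarrier := {x \<in> mcarrier N1. F x = G x}\<rparr>"
  have tp: "tensor_preserves_finite_limits M" using assms(2) by (simp add: flat_def)
  have img: "tmap E N1 M id ` mcarrier (tensor E M) =
             {t \<in> mcarrier (tensor N1 M). tmap N1 N2 M F t = tmap N1 N2 M G t}"
    using tp N1m N2m homF homG unfolding tensor_preserves_finite_limits_def E_def Let_def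
    by blast

  define s0 where "s0 = image_mset (\<lambda>i. ({ev i :: nat \<Rightarrow> 'a}, v (ev i))) (mset [0..<n])"
  have s0_in: "set_mset s0 \<subseteq> mcarrier N1 \<times> mcarrier M"
    unfolding s0_def N1_def by (auto intro!: imageI vin ev_in)
  define \<Psi> where "\<Psi> = (\<lambda>s :: ((nat \<Rightarrow> 'a) set \<times> 'm) multiset. sumM M (\<lambda>(k, y). msmul M (the_elem k 0) y) s)"
  have PsiF: "\<Psi> (image_mset (\<lambda>(x, y). (F x, y)) s0) = v f1"
  proof -
    have "\<Psi> (image_mset (\<lambda>(x, y). (F x, y)) s0) = sumM M (\<lambda>i. msmul M (pairv n (ev i) f1) (v (ev i))) (mset [0..<n])"
      unfolding \<Psi>_def s0_def by (simp add: multiset.map_comp sumM_image[OF Mm] comp_def F_def)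
    also have "\<dots> = sumM M (\<lambda>i. msmul M (f1 i) (v (ev i))) (mset [0..<n])"
      by (rule sumM_cong[OF Mm]) (simp add: pairv_ev)
    also have "\<dots> = v f1" by (rule v_decomp[OF Mm vh f1_in, symmetric])
    finally show ?thesis .
  qed
  have PsiG: "\<Psi> (image_mset (\<lambda>(x, y). (G x, y)) s0) = v g1"
  proof -
    have "\<Psi> (image_mset (\<lambda>(x, y). (G x, y)) s0) = sumM M (\<lambda>i. msmul M (pairv n (ev i) g1) (v (ev i))) (mset [0..<n])"
      unfolding \<Psi>_def s0_def by (simp add: multiset.map_comp sumM_image[OF Mm] comp_def G_def)
    also have "\<dots> = sumM M (\<lambda>i. msmul M (g1 i) (v (ev i))) (mset [0..<n])"
      by (rule sumM_cong[OF Mm]) (simp add: pairv_ev)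
    also have "\<dots> = v g1" by (rule v_decomp[OF Mm vh g1_in, symmetric])
    finally show ?thesis .
  qed
  have imF_in: "set_mset (image_mset (\<lambda>(x, y). (F x, y)) s0) \<subseteq> mcarrier N2 \<times> mcarrier M"
    using s0_in homF by (force simp: mhom_def)
  have imG_in: "set_mset (image_mset (\<lambda>(x, y). (G x, y)) s0) \<subseteq> mcarrier N2 \<times> mcarrier M"
    using s0_in homG by (force simp: mhom_def)
  have rFG: "tens_rel N2 M (image_mset (\<lambda>(x, y). (F x, y)) s0) (image_mset (\<lambda>(x, y). (G x, y)) s0)"
  proof -
    have a: "tens_rel N2 M (image_mset (\<lambda>(x, y). (F x, y)) s0) {#(one2, v f1)#}"
      using nf[OF Mm imF_in[unfolded N2_def]] PsiF unfolding N2_def \<Psi>_def by simp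
    have b: "tens_rel N2 M (image_mset (\<lambda>(x, y). (G x, y)) s0) {#(one2, v f1)#}"
      using nf[OF Mm imG_in[unfolded N2_def]] PsiG vfg unfolding N2_def \<Psi>_def by simp
    show ?thesis by (rule tens_rel.ttrans[OF a tens_rel.tsym[OF b]])
  qed
  have T0_in: "tclass N1 M s0 \<in> {t \<in> mcarrier (tensor N1 M). tmap N1 N2 M F t = tmap N1 N2 M G t}"
    using s0_in tmap_class[OF homF s0_in] tmap_class[OF homG s0_in] class_eq[OF rFG]
    by (auto simp: tensor_def)
  then obtain T where T: "T \<in> mcarrier (tensor E M)" and T0: "tmap E N1 M id T = tclass N1 M s0"
    unfolding img[symmetric] by blast
  obtain s' where T': "T = tclass E M s'" and s'_in: "set_mset s' \<subseteq> mcarrier E \<times> mcarrier M"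
    using T by (auto simp: tensor_def)
  have "s0 \<in> tclass N1 M s0" using s0_in unfolding tclass_def by (blast intro: tens_rel.trefl)
  then have "s0 \<in> tmap E N1 M id T" using T0 by simp
  then obtain s'' where s'': "tens_rel E M s' s''" and r'': "tens_rel N1 M (image_mset (\<lambda>(x, y). (id x, y)) s'') s0"
    unfolding T' tmap_def tclass_def by blast
  have homE: "mhom E N1 id" unfolding mhom_def E_def by simp
  have idim: "\<And>t. image_mset (\<lambda>(x, y). (id x, y)) t = t" by (simp add: case_prod_beta)
  have rel: "tens_rel N1 M s' s0"
    using tens_rel.ttrans[OF tr_map[OF homE s'', unfolded idim] r''[unfolded idim]] .
  obtain xs where xs: "mset xs = s'" using ex_mset by blast
  define m where "m = length xs"
  define \<kappa> where "\<kappa> = (\<lambda>j. the_elem (fst (xs ! j)))"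
  define \<mu> where "\<mu> = (\<lambda>j. snd (xs ! j))"
  have xs_in: "xs ! j \<in> mcarrier E \<times> mcarrier M" if "j < m" for j
  proof -
    have "xs ! j \<in> set xs" using that m_def by simp
    then show ?thesis using s'_in xs by auto
  qed
  have \<kappa>_prop: "\<kappa> j \<in> mcarrier (free_mod n) \<and> fst (xs ! j) = {\<kappa> j} \<and> F {\<kappa> j} = G {\<kappa> j}" if "j < m" for j
    using xs_in[OF that] unfolding \<kappa>_def E_def N1_def by auto
  have \<kappa>_eq: "pairv n (\<kappa> j) f1 = pairv n (\<kappa> j) g1" if "j < m" for j
  proof -
    have "(\<lambda>i::nat. if i = 0 then pairv n (\<kappa> j) f1 else 0) = (\<lambda>i::nat. if i = 0 then pairv n (\<kappa> j) g1 else 0)"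
    proof -
      have "F {\<kappa> j} = G {\<kappa> j}" using \<kappa>_prop[OF that] by blast
      then show ?thesis unfolding F_def G_def by (simp only: the_elem_eq singleton_inject)
    qed
    from fun_cong[OF this, of 0] show ?thesis by simp
  qed
  have \<mu>_in: "\<mu> j \<in> mcarrier M" if "j < m" for j
    using xs_in[OF that] unfolding \<mu>_def by auto
  define u where "u = (\<lambda>x j. if j < m then pairv n (\<kappa> j) x else (0::'a))"
  define w where "w = (\<lambda>y. sumM M (\<lambda>j. msmul M (y j) (\<mu> j)) (mset [0..<m]))"
  show ?thesis
  proof (intro exI conjI)
    show "mhom (free_mod n) (free_mod m) u"
      unfolding mhom_def u_def free_mod_def by (auto simp: fun_eq_iff pairv_add2 pairv_smul2 pairv_zero2)
    show "mhom (free_mod m) M w"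
      unfolding mhom_def
    proof (intro conjI ballI allI)
      fix y show "w y \<in> mcarrier M" unfolding w_def by (rule sumM_in[OF Mm])
    next
      have "w (mzero (free_mod m)) = sumM M (\<lambda>_. mzero M) (mset [0..<m])"
        unfolding w_def free_mod_def by (simp, rule sumM_cong[OF Mm]) (simp add: ms_zero[OF Mm] \<mu>_in)
      then show "w (mzero (free_mod m)) = mzero M" by (simp add: sumM_zero[OF Mm])
    next
      fix y z :: "nat \<Rightarrow> 'a" assume "y \<in> mcarrier (free_mod m)" "z \<in> mcarrier (free_mod m)"
      have "w (madd (free_mod m) y z) = sumM M (\<lambda>j. madd M (msmul M (y j) (\<mu> j)) (msmul M (z j) (\<mu> j))) (mset [0..<m])"
        unfolding w_def free_mod_def by (simp, rule sumM_cong[OF Mm]) (simp add: ms_sadd[OF Mm] \<mu>_in)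
      also have "\<dots> = madd M (w y) (w z)"
        unfolding w_def by (rule sumM_madd[OF Mm]) (simp add: ms_in[OF Mm] \<mu>_in)
      finally show "w (madd (free_mod m) y z) = madd M (w y) (w z)" .
    next
      fix a :: 'a and y :: "nat \<Rightarrow> 'a" assume "y \<in> mcarrier (free_mod m)"
      have "w (msmul (free_mod m) a y) = sumM M (\<lambda>j. msmul M a (msmul M (y j) (\<mu> j))) (mset [0..<m])"
        unfolding w_def free_mod_def by (simp, rule sumM_cong[OF Mm]) (simp add: ms_mult[OF Mm] \<mu>_in)
      also have "\<dots> = msmul M a (w y)"
        unfolding w_def by (rule sumM_msmul[OF Mm]) (simp add: ms_in[OF Mm] \<mu>_in)
      finally show "w (msmul (free_mod m) a y) = msmul M a (w y)" .
    qed
    show "\<forall>x\<in>mcarrier (free_mod n). v x = w (u x)"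
    proof
      fix x :: "nat \<Rightarrow> 'a" assume x: "x \<in> mcarrier (free_mod n)"
      define \<phi> where "\<phi> = (\<lambda>K :: (nat \<Rightarrow> 'a) set. pairv n (the_elem K) x)"
      have inv: "sumM M (\<lambda>(k, y). msmul M (\<phi> k) y) s' = sumM M (\<lambda>(k, y). msmul M (\<phi> k) y) s0"
        by (rule tr_inv[OF Mm _ _ _ rel])
           (auto simp: \<phi>_def N1_def free_mod_def pairv_add1 pairv_smul1 pairv_zero1)
      have "sumM M (\<lambda>(k, y). msmul M (\<phi> k) y) s0 = sumM M (\<lambda>i. msmul M (pairv n (ev i) x) (v (ev i))) (mset [0..<n])"
        unfolding s0_def \<phi>_def by (simp add: sumM_image[OF Mm] comp_def)
      also have "\<dots> = sumM M (\<lambda>i. msmul M (x i) (v (ev i))) (mset [0..<n])"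
        by (rule sumM_cong[OF Mm]) (simp add: pairv_ev)
      also have "\<dots> = v x" by (rule v_decomp[OF Mm vh x, symmetric])
      finally have A: "sumM M (\<lambda>(k, y). msmul M (\<phi> k) y) s' = v x" using inv by simp
      have xs_eq: "s' = image_mset (\<lambda>j. xs ! j) (mset [0..<m])"
        unfolding xs[symmetric] m_def by (metis map_nth mset_map)
      have "sumM M (\<lambda>(k, y). msmul M (\<phi> k) y) s' = sumM M (\<lambda>j. msmul M (u x j) (\<mu> j)) (mset [0..<m])"
        unfolding xs_eq sumM_image[OF Mm]
        by (rule sumM_cong[OF Mm]) (auto simp: \<phi>_def u_def \<kappa>_def \<mu>_def case_prod_beta)
      then show "v x = w (u x)" using A unfolding w_def by simp
    qed
    show "\<forall>x\<in>mcarrier regular_mod. u (f x) = u (g x)"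
      unfolding u_def f_eq g_eq by (auto simp: fun_eq_iff pairv_smul2 \<kappa>_eq)
  qed
qed

end
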